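(* For all $\alpha>1$ and all real numbers $0<a<b$, \[ \frac{(b+1)^\alpha-a^\alpha}{b^\alpha-a^\alpha}\ge\frac{(b+1)^{\alpha-1}-a^{\alpha-1}}{b^{\alpha-1}-a^{\alpha-1}}. \] *)

theory Defs
  imports Complex_Main
begin

end

theory Submission
  imports Defs "HOL-Analysis.Analysis"
begin

theorem lemma2:
  fixes \<alpha> a b :: real
  assumes "\<alpha> > 1" and "0 < a" and "a < b"
  shows "((b + 1) powr \<alpha> - a powr \<alpha>) / (b powr \<alpha> - a powr \<alpha>)
         \<ge> ((b + 1) powr (\<alpha> - 1) - a powr (\<alpha> - 1)) / (b powr (\<alpha> - 1) - a powr (\<alpha> - 1))"
proof -
  define q where "q = \<alpha> / (\<alpha> - 1)"
  define f where "f = (\<lambda>x::real. x powr q)"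
  define x0 where "x0 = a powr (\<alpha> - 1)"
  define x1 where "x1 = b powr (\<alpha> - 1)"
  define x2 where "x2 = (b + 1) powr (\<alpha> - 1)"
  have q1: "q \<ge> 1" using assms(1) by (simp add: q_def field_simps)
  have cv: "convex_on {0<..} f" unfolding f_def by (rule powr_convex[OF q1])
  have e: "(y powr (\<alpha> - 1)) powr q = y powr \<alpha>" if "y > 0" for y :: real
    using assms(1) by (simp add: powr_powr q_def)
  have f0: "f x0 = a powr \<alpha>" using e assms by (simp add: f_def x0_def)
  have f1: "f x1 = b powr \<alpha>" using e assms by (simp add: f_def x1_def)
  have f2: "f x2 = (b + 1) powr \<alpha>" using e assms by (simp add: f_def x2_def)
  have pos: "0 < x0" unfolding x0_def using assms by simp
  have l01: "x0 < x1" unfolding x0_def x1_def using assms by (intro powr_less_mono2) auto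
  have l12: "x1 < x2" unfolding x1_def x2_def using assms by (intro powr_less_mono2) auto
  have s: "(f x0 - f x1) / (x0 - x1) \<le> (f x0 - f x2) / (x0 - x2)"
    using convex_on_slope_le(1)[OF cv, of x0 x2 x1] pos l01 l12 by auto
  have P1: "f x1 - f x0 > 0" unfolding f1 f0 using assms by (intro diff_gt_0_iff_gt[THEN iffD2] powr_less_mono2) auto
  have s': "(f x1 - f x0) / (x1 - x0) \<le> (f x2 - f x0) / (x2 - x0)"
    using s by (smt (verit) minus_divide_divide)
  hence "(f x1 - f x0) * (x2 - x0) \<le> (f x2 - f x0) * (x1 - x0)"
    using l01 l12 by (simp add: divide_simps)
  hence "(x2 - x0) / (x1 - x0) \<le> (f x2 - f x0) / (f x1 - f x0)"
    using l01 P1 by (simp add: divide_simps mult.commute)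
  thus ?thesis unfolding f0 f1 f2 unfolding x0_def x1_def x2_def by simp
qed

end
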